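(* Let $p>1$, $q=\frac{p}{p-1}$ and $0<a<b$. Then $$|A(a,b)-L(a,b)|\le \frac{\log b-\log a}{2(p+1)^{1/p}}\,\bigl(A(|a|^q,|b|^q)\bigr)^{1/q}.$$
   Context: For positive $x,y$: the arithmetic mean is $A(x,y)=\frac{x+y}{2}$; the logarithmic mean is $L(x,y)=x$ if $x=y$ and $L(x,y)=\frac{y-x}{\log y-\log x}$ if $x\ne y$. *)

theory Defs
  imports Complex_Main
begin

definition amean :: "real \<Rightarrow> real \<Rightarrow> real" where
  "amean x y = (x + y) / 2"

definition lmean :: "real \<Rightarrow> real \<Rightarrow> real" where
  "lmean x y = (if x = y then x else (y - x) / (ln y - ln x))"

end

theory Submission
  imports Defs "HOL-Analysis.Analysis"
begin

lemma aux_n: fixes t :: real assumes "t \<ge> 0" shows "exp t * (t - 2) + t + 2 \<ge> 0"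
proof -
  have d1: "exp x * (x - 1) + 1 \<ge> 0" if "x \<ge> 0" for x :: real
  proof -
    have "exp 0 * (0 - 1) + 1 \<le> exp x * (x - 1) + 1"
      by (rule DERIV_nonneg_imp_nondecreasing[OF that])
         (auto intro!: derivative_eq_intros exI[of _ "exp _ * _"] simp: algebra_simps)
    then show ?thesis by simp
  qed
  have "exp 0 * (0 - 2) + 0 + 2 \<le> exp t * (t - 2) + t + 2"
    apply (rule DERIV_nonneg_imp_nondecreasing[OF assms])
    apply (rule exI[of _ "exp _ * (_ - 1) + 1"])
    using d1 by (auto intro!: derivative_eq_intros simp: algebra_simps)
  then show ?thesis by simp
qed

lemma aux_m: fixes t :: real assumes "t \<ge> 0"
  shows "exp t * (t^2 - 4*t + 8) - (8 + 4*t - t^2) \<ge> 0"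
proof -
  have d2: "exp x * (x^2 - 2*x + 4) - 4 + 2*x \<ge> 0" if "x \<ge> 0" for x :: real
  proof -
    have "exp 0 * (0^2 - 2*0 + 4) - 4 + 2*0 \<le> exp x * (x^2 - 2*x + 4) - 4 + 2*x"
    proof (rule DERIV_nonneg_imp_nondecreasing[OF that], goal_cases)
      case (1 y)
      show ?case
        by (rule exI[of _ "exp y * (y^2 + 2) + 2"])
           (use 1 in \<open>auto intro!: derivative_eq_intros add_nonneg_nonneg mult_nonneg_nonneg simp: algebra_simps power2_eq_square\<close>)
    qed
    then show ?thesis by simp
  qed
  have "exp 0 * (0^2 - 4*0 + 8) - (8 + 4*0 - 0^2) \<le> exp t * (t^2 - 4*t + 8) - (8 + 4*t - t^2)"
  proof (rule DERIV_nonneg_imp_nondecreasing[OF assms], goal_cases)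
    case (1 y)
    show ?case
      by (rule exI[of _ "exp y * (y^2 - 2*y + 4) - 4 + 2*y"])
         (use d2[of y] 1 in \<open>auto intro!: derivative_eq_intros simp: algebra_simps power2_eq_square\<close>)
  qed
  then show ?thesis by simp
qed


lemma key: fixes t :: real assumes "t > 0"
  shows "0 \<le> t*(1+exp t)/2 - (exp t - 1)" and "t*(1+exp t)/2 - (exp t - 1) \<le> t^2*(1+exp t)/8"
proof -
  have e1: "t*(1+exp t)/2 - (exp t - 1) = (exp t*(t-2)+t+2)/2" by (simp add: field_simps)
  show "0 \<le> t*(1+exp t)/2 - (exp t - 1)" unfolding e1 using aux_n[of t] assms by simp
  have e2: "t^2*(1+exp t)/8 - (t*(1+exp t)/2 - (exp t - 1)) = (exp t * (t^2 - 4*t + 8) - (8 + 4*t - t^2))/8"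
    by (simp add: field_simps power2_eq_square)
  have "0 \<le> t^2*(1+exp t)/8 - (t*(1+exp t)/2 - (exp t - 1))" unfolding e2 using aux_m[of t] assms by simp
  then show "t*(1+exp t)/2 - (exp t - 1) \<le> t^2*(1+exp t)/8" by simp
qed

lemma pbound: fixes p :: real assumes "p \<ge> 1" shows "p + 1 \<le> 2 powr p"
proof -
  have l2: "ln 2 \<ge> (1/2::real)" using ln2_ge_two_thirds by simp
  have "2 powr 1 - 1 - 1 \<le> 2 powr p - p - 1"
  proof (rule DERIV_nonneg_imp_nondecreasing[OF assms], goal_cases)
    case (1 y)
    have "2 powr y \<ge> 2 powr 1" using 1 by (intro powr_mono) auto
    then have "2 powr y \<ge> 2" by simp
    from mult_mono[OF l2 this] have "ln 2 * 2 powr y \<ge> 1" by simp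
    then show ?case
      by (intro exI[of _ "ln 2 * 2 powr y - 1"])
         (auto intro!: derivative_eq_intros simp: algebra_simps)
  qed
  then show ?thesis by simp
qed

theorem proposition1:
  fixes p q a b :: real
  assumes "p > 1" and "q = p / (p - 1)" and "0 < a" and "a < b"
  shows "\<bar>amean a b - lmean a b\<bar> \<le>
    (ln b - ln a) / (2 * (p + 1) powr (1 / p)) * (amean (\<bar>a\<bar> powr q) (\<bar>b\<bar> powr q)) powr (1 / q)"
proof -
  define t where "t = ln b - ln a"
  have tpos: "t > 0" using assms by (simp add: t_def)
  have bE: "b = a * exp t" using assms by (simp add: t_def exp_diff)
  have L: "lmean a b = (b - a) / t" using assms by (simp add: lmean_def t_def)
  have AL: "amean a b - lmean a b = a * (t*(1+exp t)/2 - (exp t - 1)) / t"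
  proof -
    have "amean a b - lmean a b = (a+b)/2 - (b-a)/t" unfolding L amean_def ..
    also have "\<dots> = a * (t*(1+exp t)/2 - (exp t - 1)) / t" using tpos unfolding bE by (simp add: field_simps)
    finally show ?thesis .
  qed
  have k1: "0 \<le> amean a b - lmean a b" unfolding AL using key(1)[OF tpos] assms tpos by simp
  have "amean a b - lmean a b \<le> a * (t^2*(1+exp t)/8) / t" unfolding AL
    using key(2)[OF tpos] assms tpos by (intro divide_right_mono mult_left_mono) auto
  also have "\<dots> = t * (a + b) / 8" using tpos unfolding bE by (simp add: field_simps power2_eq_square)
  finally have k2: "amean a b - lmean a b \<le> t * (a + b) / 8" .
  have q1: "q \<ge> 1" using assms by (simp add: le_divide_eq)
  have P: "(p + 1) powr (1/p) \<le> 2"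
  proof -
    have "(p + 1) powr (1/p) \<le> (2 powr p) powr (1/p)"
      using pbound[of p] assms by (intro powr_mono2) auto
    also have "\<dots> = 2" using assms by (simp add: powr_powr)
    finally show ?thesis .
  qed
  have Ppos: "(p + 1) powr (1/p) > 0" using assms by simp
  have conv: "((a+b)/2) powr q \<le> (a powr q + b powr q)/2"
  proof -
    have "convex_on {0<..} (\<lambda>x. x powr q)" using powr_convex q1 by blast
    from convex_onD[OF this, of "1/2" a b] \<open>0 < a\<close> \<open>a < b\<close>
    show ?thesis by (simp add: field_simps)
  qed
  have M: "(a+b)/2 \<le> amean (\<bar>a\<bar> powr q) (\<bar>b\<bar> powr q) powr (1/q)"
  proof -
    have "(a+b)/2 = (((a+b)/2) powr q) powr (1/q)" using assms q1 by (simp add: powr_powr)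
    also have "\<dots> \<le> amean (\<bar>a\<bar> powr q) (\<bar>b\<bar> powr q) powr (1/q)"
      using conv assms q1 unfolding amean_def by (intro powr_mono2) auto
    finally show ?thesis .
  qed
  have "t * (a + b) / 8 = t / (2 * 2) * ((a+b)/2)" by simp
  also have "\<dots> \<le> t / (2 * (p + 1) powr (1 / p)) * ((a+b)/2)"
    using P Ppos tpos assms by (intro mult_right_mono divide_left_mono mult_left_mono mult_pos_pos) auto
  also have "\<dots> \<le> t / (2 * (p + 1) powr (1 / p)) * amean (\<bar>a\<bar> powr q) (\<bar>b\<bar> powr q) powr (1/q)"
    using M Ppos tpos by (intro mult_left_mono) auto
  finally show ?thesis using k1 k2 by (simp add: t_def)
qed

end
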